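(* There exists $\lambda_0\ge 0$ such that for every $\lambda\ge\lambda_0$, the cross-group ordering $o=O(n^a,n^b)$ output by the xOrder procedure with parameter $\lambda$ satisfies $$\Delta\mathrm{xAUC}^o\le\max\left(\frac{1}{n_1^a},\frac{1}{n_1^b}\right).$$
   Context: Setting: two disjoint finite groups $a,b$ of instances with labels $Y_u\in\{0,1\}$; $n^g,n^g_1,n^g_0$ denote the size, number of positives and number of negatives of group $g$ (all counts $\ge1$); $n_1=n_1^a+n_1^b$, $n_0=n_0^a+n_0^b$, $k_{a,b}=n_1^an_0^b$, $k_{b,a}=n_0^an_1^b$, $k=n_0n_1$. $\mathrm{p}^a=(\mathrm{p}^{a(1)},\dots,\mathrm{p}^{a(n^a)})$ and $\mathrm{p}^b=(\mathrm{p}^{b(1)},\dots,\mathrm{p}^{b(n^b)})$ are fixed orderings of the groups. A cross-group ordering is a list of all instances of $a\cup b$ preserving the relative orders within $\mathrm{p}^a$ and within $\mathrm{p}^b$; "precedes" means ranked higher. $\mathrm{xAUC}^o(a,b)=\frac{1}{n_1^an_0^b}\#\{(u,v):u\in a,Y_u=1,v\in b,Y_v=0,u\text{ precedes }v\text{ in }o\}$, $\mathrm{xAUC}^o(b,a)$ symmetrically; $\Delta\mathrm{xAUC}^o=|\mathrm{xAUC}^o(a,b)-\mathrm{xAUC}^o(b,a)|$. xOrder: For $0\le i\le n^a$, $0\le j\le n^b$ and a list $q$ interleaving $\mathrm{p}^{a(1)},\dots,\mathrm{p}^{a(i)}$ and $\mathrm{p}^{b(1)},\dots,\mathrm{p}^{b(j)}$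 with within-group orders preserved, let $q^{\to b}$ be $q$ followed by $\mathrm{p}^{b(j+1)},\dots,\mathrm{p}^{b(n^b)}$ and $q^{\to a}$ be $q$ followed by $\mathrm{p}^{a(i+1)},\dots,\mathrm{p}^{a(n^a)}$. Define $A(q)=\frac{1}{n_1^an_0^b}\#\{(u,v): u\in\{\mathrm{p}^{a(1)},..,\mathrm{p}^{a(i)}\},Y_u=1,v\in b,Y_v=0,u\text{ precedes }v\text{ in }q^{\to b}\}$, $B(q)=\frac{1}{n_1^bn_0^a}\#\{(u,v): u\in\{\mathrm{p}^{b(1)},..,\mathrm{p}^{b(j)}\},Y_u=1,v\in a,Y_v=0,u\text{ precedes }v\text{ in }q^{\to a}\}$, and $\widehat G(q)=\frac{k_{a,b}}{k}A(q)+\frac{k_{b,a}}{k}B(q)-\lambda|A(q)-B(q)|$. Set $O(i,0)=(\mathrm{p}^{a(1)},\dots,\mathrm{p}^{a(i)})$, $O(0,j)=(\mathrm{p}^{b(1)},\dots,\mathrm{p}^{b(j)})$. For $i=1,\dots,n^a$, $j=1,\dots,n^b$ (in increasing order): if $\widehat G(O(i-1,j)\oplus\mathrm{p}^{a(i)})>\widehat G(O(i,j-1)\oplus\mathrm{p}^{b(j)})$ then $O(i,j)=O(i-1,j)\oplus\mathrm{p}^{a(i)}$, otherwise $O(i,j)=O(i,j-1)\oplus\mathrm{p}^{b(j)}$ ($\oplus$ appends an element to the end of a list). The output is $O(n^a,n^b)$. *)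

theory Defs
  imports Complex_Main
begin

(* Model: group a has n^a = length la instances, identified with their positions in the
   fixed ordering p^a; Inl i stands for p^{a(i+1)} (0-based), with label la ! i.
   Likewise Inr j stands for p^{b(j+1)} with label lb ! j.
   A (partial) cross-group ordering is a list of such elements, earlier = ranked higher. *)

type_synonym item = "nat + nat"

definition precedes :: "item \<Rightarrow> item \<Rightarrow> item list \<Rightarrow> bool" where
  "precedes x y xs \<longleftrightarrow> (\<exists>k l. k < l \<and> l < length xs \<and> xs ! k = x \<and> xs ! l = y)"

definition npos :: "bool list \<Rightarrow> nat" where
  "npos l = length (filter (\<lambda>y. y) l)"

definition nneg :: "bool list \<Rightarrow> nat" where
  "nneg l = length (filter Not l)"

definition xAUC_ab :: "bool list \<Rightarrow> bool list \<Rightarrow> item list \<Rightarrow> real" where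
  "xAUC_ab la lb ord = real (card {(u, v). u < length la \<and> la ! u \<and> v < length lb \<and> \<not> lb ! v
        \<and> precedes (Inl u) (Inr v) ord}) / (real (npos la) * real (nneg lb))"

definition xAUC_ba :: "bool list \<Rightarrow> bool list \<Rightarrow> item list \<Rightarrow> real" where
  "xAUC_ba la lb ord = real (card {(u, v). u < length lb \<and> lb ! u \<and> v < length la \<and> \<not> la ! v
        \<and> precedes (Inr u) (Inl v) ord}) / (real (npos lb) * real (nneg la))"

definition delta_xAUC :: "bool list \<Rightarrow> bool list \<Rightarrow> item list \<Rightarrow> real" where
  "delta_xAUC la lb ord = \<bar>xAUC_ab la lb ord - xAUC_ba la lb ord\<bar>"

definition cnt_a :: "item list \<Rightarrow> nat" where "cnt_a q = length (filter isl q)"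
definition cnt_b :: "item list \<Rightarrow> nat" where "cnt_b q = length (filter (\<lambda>x. \<not> isl x) q)"

definition ext_b :: "bool list \<Rightarrow> item list \<Rightarrow> item list" where
  "ext_b lb q = q @ map Inr [cnt_b q..<length lb]"
definition ext_a :: "bool list \<Rightarrow> item list \<Rightarrow> item list" where
  "ext_a la q = q @ map Inl [cnt_a q..<length la]"

definition A_part :: "bool list \<Rightarrow> bool list \<Rightarrow> item list \<Rightarrow> real" where
  "A_part la lb q = real (card {(u, v). u < cnt_a q \<and> la ! u \<and> v < length lb \<and> \<not> lb ! v
        \<and> precedes (Inl u) (Inr v) (ext_b lb q)}) / (real (npos la) * real (nneg lb))"

definition B_part :: "bool list \<Rightarrow> bool list \<Rightarrow> item list \<Rightarrow> real" where
  "B_part la lb q = real (card {(u, v). u < cnt_b q \<and> lb ! u \<and> v < length la \<and> \<not> la ! v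
        \<and> precedes (Inr u) (Inl v) (ext_a la q)}) / (real (npos lb) * real (nneg la))"

definition G_hat :: "bool list \<Rightarrow> bool list \<Rightarrow> real \<Rightarrow> item list \<Rightarrow> real" where
  "G_hat la lb lam q =
     (let k = real (npos la + npos lb) * real (nneg la + nneg lb);
          kab = real (npos la) * real (nneg lb);
          kba = real (nneg la) * real (npos lb)
      in kab / k * A_part la lb q + kba / k * B_part la lb q
         - lam * \<bar>A_part la lb q - B_part la lb q\<bar>)"

fun xO :: "bool list \<Rightarrow> bool list \<Rightarrow> real \<Rightarrow> nat \<Rightarrow> nat \<Rightarrow> item list" where
  "xO la lb lam 0 j = map Inr [0..<j]"
| "xO la lb lam (Suc i) 0 = map Inl [0..<Suc i]"
| "xO la lb lam (Suc i) (Suc j) =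
     (if G_hat la lb lam (xO la lb lam i (Suc j) @ [Inl i])
         > G_hat la lb lam (xO la lb lam (Suc i) j @ [Inr j])
      then xO la lb lam i (Suc j) @ [Inl i]
      else xO la lb lam (Suc i) j @ [Inr j])"

definition xOrder :: "bool list \<Rightarrow> bool list \<Rightarrow> real \<Rightarrow> item list" where
  "xOrder la lb lam = xO la lb lam (length la) (length lb)"

end

theory Submission imports Defs begin

lemma precedes_Nil[simp]: "\<not> precedes x y []" by (simp add: precedes_def)

lemma precedes_Cons: "precedes x y (a # xs) \<longleftrightarrow> (a = x \<and> y \<in> set xs) \<or> precedes x y xs"
proof
  assume "precedes x y (a#xs)"
  then obtain k l where kl: "k<l" "l < length (a#xs)" "(a#xs)!k = x" "(a#xs)!l = y"
    by (auto simp: precedes_def)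
  obtain l' where l': "l = Suc l'" using kl by (cases l) auto
  show "(a = x \<and> y \<in> set xs) \<or> precedes x y xs"
  proof (cases k)
    case 0
    then show ?thesis using kl l' by auto
  next
    case (Suc k')
    then have "k' < l'" "l' < length xs" "xs!k' = x" "xs!l' = y" using kl l' by auto
    then show ?thesis unfolding precedes_def by blast
  qed
next
  assume "(a = x \<and> y \<in> set xs) \<or> precedes x y xs"
  then show "precedes x y (a#xs)"
  proof
    assume h: "a = x \<and> y \<in> set xs"
    then obtain l where "l < length xs" "xs!l = y" by (auto simp: in_set_conv_nth)
    then show ?thesis using h unfolding precedes_def
      by (intro exI[of _ 0] exI[of _ "Suc l"]) auto
  next
    assume "precedes x y xs"
    then obtain k l where "k<l" "l < length xs" "xs!k = x" "xs!l = y"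
      by (auto simp: precedes_def)
    then show ?thesis unfolding precedes_def
      by (intro exI[of _ "Suc k"] exI[of _ "Suc l"]) auto
  qed
qed

lemma precedes_append:
  "precedes x y (xs @ ys) \<longleftrightarrow> precedes x y xs \<or> (x \<in> set xs \<and> y \<in> set ys) \<or> precedes x y ys"
  by (induction xs) (auto simp: precedes_Cons)

lemma precedes_setD: "precedes x y xs \<Longrightarrow> x \<in> set xs \<and> y \<in> set xs"
  by (auto simp: precedes_def)

definition validq :: "item list \<Rightarrow> bool" where
  "validq q \<longleftrightarrow> (\<forall>x\<in>set q. case x of Inl u \<Rightarrow> u < cnt_a q | Inr v \<Rightarrow> v < cnt_b q)"

lemma cnt_append_Inl[simp]: "cnt_a (q @ [Inl i]) = Suc (cnt_a q)" "cnt_b (q @ [Inl i]) = cnt_b q"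
  by (auto simp: cnt_a_def cnt_b_def)
lemma cnt_append_Inr[simp]: "cnt_a (q @ [Inr i]) = cnt_a q" "cnt_b (q @ [Inr i]) = Suc (cnt_b q)"
  by (auto simp: cnt_a_def cnt_b_def)

lemma validq_Inl: "validq q \<Longrightarrow> cnt_a q = i \<Longrightarrow> validq (q @ [Inl i])"
  by (auto simp: validq_def split: sum.splits)
lemma validq_Inr: "validq q \<Longrightarrow> cnt_b q = i \<Longrightarrow> validq (q @ [Inr i])"
  by (auto simp: validq_def split: sum.splits)

lemma xO_map_Inl: "map Inl [0..<i] = (xO la lb lam i 0 :: item list)"
  by (cases i) auto

lemma xO_props: "cnt_a (xO la lb lam i j) = i \<and> cnt_b (xO la lb lam i j) = j \<and> validq (xO la lb lam i j)"
proof (induction la lb lam i j rule: xO.induct)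
  case (1 la lb lam j)
  then show ?case by (auto simp: cnt_a_def cnt_b_def validq_def filter_map comp_def)
next
  case (2 la lb lam i)
  then show ?case by (auto simp: cnt_a_def cnt_b_def validq_def filter_map comp_def)
next
  case (3 la lb lam i j)
  then show ?case by (auto intro: validq_Inl validq_Inr)
qed


definition SA :: "bool list \<Rightarrow> bool list \<Rightarrow> item list \<Rightarrow> (nat \<times> nat) set" where
  "SA la lb q = {(u, v). u < cnt_a q \<and> la ! u \<and> v < length lb \<and> \<not> lb ! v
        \<and> precedes (Inl u) (Inr v) (ext_b lb q)}"
definition TB :: "bool list \<Rightarrow> bool list \<Rightarrow> item list \<Rightarrow> (nat \<times> nat) set" where
  "TB la lb q = {(u, v). u < cnt_b q \<and> lb ! u \<and> v < length la \<and> \<not> la ! v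
        \<and> precedes (Inr u) (Inl v) (ext_a la q)}"

lemma A_part_SA: "A_part la lb q = real (card (SA la lb q)) / (real (npos la) * real (nneg lb))"
  by (simp add: A_part_def SA_def)
lemma B_part_TB: "B_part la lb q = real (card (TB la lb q)) / (real (npos lb) * real (nneg la))"
  by (simp add: B_part_def TB_def)

lemma npos_card: "npos l = card {u. u < length l \<and> l ! u}"
  unfolding npos_def by (simp add: length_filter_conv_card)
lemma nneg_card: "nneg l = card {u. u < length l \<and> \<not> l ! u}"
  unfolding nneg_def by (simp add: length_filter_conv_card)

lemma SA_sub: "SA la lb q \<subseteq> {u. u < length la \<and> la ! u} \<times> {v. v < length lb \<and> \<not> lb ! v}"
  if "cnt_a q \<le> length la" using that by (auto simp: SA_def)
lemma TB_sub: "TB la lb q \<subseteq> {u. u < length lb \<and> lb ! u} \<times> {v. v < length la \<and> \<not> la ! v}"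
  if "cnt_b q \<le> length lb" using that by (auto simp: TB_def)

lemma card_SA_le: "cnt_a q \<le> length la \<Longrightarrow> card (SA la lb q) \<le> npos la * nneg lb"
  unfolding npos_card nneg_card card_cartesian_product[symmetric]
  by (rule card_mono) (auto intro!: SA_sub)
lemma card_TB_le: "cnt_b q \<le> length lb \<Longrightarrow> card (TB la lb q) \<le> npos lb * nneg la"
  unfolding npos_card nneg_card card_cartesian_product[symmetric]
  by (rule card_mono) (auto intro!: TB_sub)

lemma finite_SA: "finite (SA la lb q)"
  by (rule finite_subset[of _ "{..<cnt_a q} \<times> {..<length lb}"]) (auto simp: SA_def)
lemma finite_TB: "finite (TB la lb q)"
  by (rule finite_subset[of _ "{..<cnt_b q} \<times> {..<length la}"]) (auto simp: TB_def)

lemma Inl_notin: "validq q \<Longrightarrow> Inl (cnt_a q) \<notin> set q"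
  by (auto simp: validq_def split: sum.splits)
lemma Inr_notin: "validq q \<Longrightarrow> Inr (cnt_b q) \<notin> set q"
  by (auto simp: validq_def split: sum.splits)

lemma ext_b_Inl: "ext_b lb (q @ [Inl i]) = q @ Inl i # map Inr [cnt_b q..<length lb]"
  by (simp add: ext_b_def)
lemma ext_a_Inr: "ext_a la (q @ [Inr i]) = q @ Inr i # map Inl [cnt_a q..<length la]"
  by (simp add: ext_a_def)
lemma ext_a_Inl: "cnt_a q < length la \<Longrightarrow> ext_a la (q @ [Inl (cnt_a q)]) = ext_a la q"
  by (simp add: ext_a_def upt_conv_Cons)
lemma ext_b_Inr: "cnt_b q < length lb \<Longrightarrow> ext_b lb (q @ [Inr (cnt_b q)]) = ext_b lb q"
  by (simp add: ext_b_def upt_conv_Cons)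

lemma TB_Inl: "cnt_a q < length la \<Longrightarrow> TB la lb (q @ [Inl (cnt_a q)]) = TB la lb q"
  by (simp add: TB_def ext_a_Inl)
lemma SA_Inr: "cnt_b q < length lb \<Longrightarrow> SA la lb (q @ [Inr (cnt_b q)]) = SA la lb q"
  by (simp add: SA_def ext_b_Inr)

lemma SA_Inl1: "SA la lb q \<subseteq> SA la lb (q @ [Inl i])"
  by (auto simp: SA_def ext_b_Inl ext_b_def precedes_append precedes_Cons)
lemma SA_Inl2: "SA la lb (q @ [Inl (cnt_a q)]) \<subseteq> SA la lb q \<union> {cnt_a q} \<times> {v. v < length lb \<and> \<not> lb ! v}"
  by (auto simp: SA_def ext_b_Inl ext_b_def precedes_append precedes_Cons less_Suc_eq)
lemma SA_Inl3: "validq q \<Longrightarrow> cnt_b q = length lb \<Longrightarrow> SA la lb (q @ [Inl (cnt_a q)]) = SA la lb q"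
  apply (rule equalityI)
   apply (auto simp: SA_def ext_b_Inl ext_b_def precedes_append precedes_Cons less_Suc_eq dest: Inl_notin precedes_setD)
  done

lemma TB_Inr1: "TB la lb q \<subseteq> TB la lb (q @ [Inr i])"
  by (auto simp: TB_def ext_a_Inr ext_a_def precedes_append precedes_Cons)
lemma TB_Inr2: "TB la lb (q @ [Inr (cnt_b q)]) \<subseteq> TB la lb q \<union> {cnt_b q} \<times> {v. v < length la \<and> \<not> la ! v}"
  by (auto simp: TB_def ext_a_Inr ext_a_def precedes_append precedes_Cons less_Suc_eq)
lemma TB_Inr3: "validq q \<Longrightarrow> cnt_a q = length la \<Longrightarrow> TB la lb (q @ [Inr (cnt_b q)]) = TB la lb q"
  apply (rule equalityI)
   apply (auto simp: TB_def ext_a_Inr ext_a_def precedes_append precedes_Cons less_Suc_eq dest: Inr_notin precedes_setD)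
  done


lemma card_SA_Inl:
  assumes "validq q"
  shows "card (SA la lb q) \<le> card (SA la lb (q @ [Inl (cnt_a q)]))"
    "card (SA la lb (q @ [Inl (cnt_a q)])) \<le> card (SA la lb q) + nneg lb"
proof -
  show "card (SA la lb q) \<le> card (SA la lb (q @ [Inl (cnt_a q)]))"
    by (rule card_mono[OF finite_SA SA_Inl1])
  have "card (SA la lb (q @ [Inl (cnt_a q)])) \<le> card (SA la lb q \<union> {cnt_a q} \<times> {v. v < length lb \<and> \<not> lb ! v})"
    by (rule card_mono[OF _ SA_Inl2]) (auto intro: finite_SA)
  also have "\<dots> \<le> card (SA la lb q) + card ({cnt_a q} \<times> {v. v < length lb \<and> \<not> lb ! v})"
    by (rule card_Un_le)
  also have "card ({cnt_a q} \<times> {v. v < length lb \<and> \<not> lb ! v}) = nneg lb"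
    by (simp add: card_cartesian_product nneg_card)
  finally show "card (SA la lb (q @ [Inl (cnt_a q)])) \<le> card (SA la lb q) + nneg lb" .
qed

lemma card_TB_Inr:
  assumes "validq q"
  shows "card (TB la lb q) \<le> card (TB la lb (q @ [Inr (cnt_b q)]))"
    "card (TB la lb (q @ [Inr (cnt_b q)])) \<le> card (TB la lb q) + nneg la"
proof -
  show "card (TB la lb q) \<le> card (TB la lb (q @ [Inr (cnt_b q)]))"
    by (rule card_mono[OF finite_TB TB_Inr1])
  have "card (TB la lb (q @ [Inr (cnt_b q)])) \<le> card (TB la lb q \<union> {cnt_b q} \<times> {v. v < length la \<and> \<not> la ! v})"
    by (rule card_mono[OF _ TB_Inr2]) (auto intro: finite_TB)
  also have "\<dots> \<le> card (TB la lb q) + card ({cnt_b q} \<times> {v. v < length la \<and> \<not> la ! v})"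
    by (rule card_Un_le)
  also have "card ({cnt_b q} \<times> {v. v < length la \<and> \<not> la ! v}) = nneg la"
    by (simp add: card_cartesian_product nneg_card)
  finally show "card (TB la lb (q @ [Inr (cnt_b q)])) \<le> card (TB la lb q) + nneg la" .
qed

lemma step_bound:
  fixes c c' p n :: nat
  assumes "c \<le> c'" "c' \<le> c + n" "p \<ge> 1" "n \<ge> 1"
  shows "0 \<le> real c' / (real p * real n) - real c / (real p * real n)"
    "real c' / (real p * real n) - real c / (real p * real n) \<le> 1 / real p"
proof -
  have pn: "real p * real n > 0" using assms by simp
  have e: "real c' / (real p * real n) - real c / (real p * real n) = (real c' - real c) / (real p * real n)"
    by (simp add: diff_divide_distrib)
  show "0 \<le> real c' / (real p * real n) - real c / (real p * real n)"
    unfolding e using assms pn by (intro divide_nonneg_pos) auto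
  have "(real c' - real c) / (real p * real n) \<le> real n / (real p * real n)"
    using assms pn by (intro divide_right_mono) auto
  also have "\<dots> = 1 / real p" using assms by simp
  finally show "real c' / (real p * real n) - real c / (real p * real n) \<le> 1 / real p"
    unfolding e .
qed

lemma A_Inl:
  assumes "validq q" "npos la \<ge> 1" "nneg lb \<ge> 1"
  shows "0 \<le> A_part la lb (q @ [Inl (cnt_a q)]) - A_part la lb q"
    "A_part la lb (q @ [Inl (cnt_a q)]) - A_part la lb q \<le> 1 / real (npos la)"
  using step_bound[OF card_SA_Inl[OF assms(1)] assms(2,3)] unfolding A_part_SA by auto

lemma B_Inr:
  assumes "validq q" "npos lb \<ge> 1" "nneg la \<ge> 1"
  shows "0 \<le> B_part la lb (q @ [Inr (cnt_b q)]) - B_part la lb q"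
    "B_part la lb (q @ [Inr (cnt_b q)]) - B_part la lb q \<le> 1 / real (npos lb)"
  using step_bound[OF card_TB_Inr[OF assms(1)] assms(2,3)] unfolding B_part_TB by auto

lemma A_Inl0: "validq q \<Longrightarrow> cnt_b q = length lb \<Longrightarrow> A_part la lb (q @ [Inl (cnt_a q)]) = A_part la lb q"
  unfolding A_part_SA by (simp add: SA_Inl3)
lemma B_Inr0: "validq q \<Longrightarrow> cnt_a q = length la \<Longrightarrow> B_part la lb (q @ [Inr (cnt_b q)]) = B_part la lb q"
  unfolding B_part_TB by (simp add: TB_Inr3)
lemma B_Inl: "cnt_a q < length la \<Longrightarrow> B_part la lb (q @ [Inl (cnt_a q)]) = B_part la lb q"
  unfolding B_part_TB by (simp add: TB_Inl)
lemma A_Inr: "cnt_b q < length lb \<Longrightarrow> A_part la lb (q @ [Inr (cnt_b q)]) = A_part la lb q"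
  unfolding A_part_SA by (simp add: SA_Inr)

lemma A_range: "cnt_a q \<le> length la \<Longrightarrow> npos la \<ge> 1 \<Longrightarrow> nneg lb \<ge> 1 \<Longrightarrow> 0 \<le> A_part la lb q \<and> A_part la lb q \<le> 1"
  unfolding A_part_SA using card_SA_le[of q la lb]
  by (auto simp: divide_le_eq of_nat_mult[symmetric] simp del: of_nat_mult)
lemma B_range: "cnt_b q \<le> length lb \<Longrightarrow> npos lb \<ge> 1 \<Longrightarrow> nneg la \<ge> 1 \<Longrightarrow> 0 \<le> B_part la lb q \<and> B_part la lb q \<le> 1"
  unfolding B_part_TB using card_TB_le[of q lb la]
  by (auto simp: divide_le_eq of_nat_mult[symmetric] simp del: of_nat_mult)

lemma A0: "cnt_a q = 0 \<Longrightarrow> A_part la lb q = 0"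
  by (simp add: A_part_SA SA_def)
lemma B0: "cnt_b q = 0 \<Longrightarrow> B_part la lb q = 0"
  by (simp add: B_part_TB TB_def)

lemma AB_int:
  assumes "npos la \<ge> 1" "nneg lb \<ge> 1" "npos lb \<ge> 1" "nneg la \<ge> 1"
  shows "\<exists>z::int. real (npos la * nneg lb * npos lb * nneg la) * (A_part la lb q - B_part la lb q) = of_int z"
proof -
  let ?a = "card (SA la lb q)" and ?b = "card (TB la lb q)"
  have "real (npos la * nneg lb * npos lb * nneg la) * (A_part la lb q - B_part la lb q)
     = real (?a * (npos lb * nneg la)) - real (?b * (npos la * nneg lb))"
    unfolding A_part_SA B_part_TB using assms by (simp add: field_simps)
  then show ?thesis
    by (intro exI[of _ "int (?a * (npos lb * nneg la)) - int (?b * (npos la * nneg lb))"]) simp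
qed

lemma K_arith:
  fixes dp dq dr ds dt ap bp aq bq M :: real
  assumes "0 \<le> ap" "ap \<le> M" "0 \<le> bp" "bp \<le> M" "0 \<le> aq" "aq \<le> M" "0 \<le> bq" "bq \<le> M"
  and P: "dp = dr + ap \<or> (dp = ds - bp \<and> \<bar>dp\<bar> \<le> \<bar>dr + ap\<bar> \<and> \<not> (ds > M \<and> dr < -M))"
  and Q: "dq = dr - bq \<or> (dq = dt + aq \<and> \<bar>dq\<bar> \<le> \<bar>dr - bq\<bar> \<and> \<not> (dr > M \<and> dt < -M))"
  shows "\<not> (dp > M \<and> dq < -M)"
  using P Q assms by (smt (verit))

lemma abstract_grid:
  fixes d \<alpha> \<beta> :: "nat \<Rightarrow> nat \<Rightarrow> real" and M :: real and na nb :: nat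
  assumes al: "\<And>i j. 0 \<le> \<alpha> i j" "\<And>i j. \<alpha> i j \<le> M"
  and be: "\<And>i j. 0 \<le> \<beta> i j" "\<And>i j. \<beta> i j \<le> M"
  and alz: "\<And>i. \<alpha> i nb = 0" and bez: "\<And>j. \<beta> na j = 0"
  and d00: "d 0 0 = 0"
  and bx: "\<And>i. 1 \<le> i \<Longrightarrow> i \<le> na \<Longrightarrow> d i 0 = d (i-1) 0 + \<alpha> i 0"
  and bY: "\<And>j. 1 \<le> j \<Longrightarrow> j \<le> nb \<Longrightarrow> d 0 j = d 0 (j-1) - \<beta> 0 j"
  and int: "\<And>i j. 1 \<le> i \<Longrightarrow> i \<le> na \<Longrightarrow> 1 \<le> j \<Longrightarrow> j \<le> nb \<Longrightarrow>
      (d i j = d (i-1) j + \<alpha> i j \<or> d i j = d i (j-1) - \<beta> i j)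
      \<and> \<bar>d i j\<bar> \<le> \<bar>d (i-1) j + \<alpha> i j\<bar> \<and> \<bar>d i j\<bar> \<le> \<bar>d i (j-1) - \<beta> i j\<bar>"
  and na1: "1 \<le> na" and nb1: "1 \<le> nb"
  shows "\<bar>d na nb\<bar> \<le> M"
proof -
  have M0: "0 \<le> M" using al(1)[of 0 0] al(2)[of 0 0] by linarith
  have row0: "d 0 j \<le> 0" if "j \<le> nb" for j
    using that
  proof (induction j)
    case 0 then show ?case using d00 by simp
  next
    case (Suc j) then show ?case using bY[of "Suc j"] be(1)[of 0 "Suc j"] by simp
  qed
  have col0: "d i 0 \<ge> 0" if "i \<le> na" for i
    using that
  proof (induction i)
    case 0 then show ?case using d00 by simp
  next
    case (Suc i) then show ?case using bx[of "Suc i"] al(1)[of "Suc i" 0] by simp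
  qed
  have K: "\<forall>i j. i + j = n \<longrightarrow> 1 \<le> i \<longrightarrow> i \<le> na \<longrightarrow> 1 \<le> j \<longrightarrow> j \<le> nb
           \<longrightarrow> \<not> (d i (j-1) > M \<and> d (i-1) j < -M)" for n
  proof (induction n rule: less_induct)
    case (less n)
    show ?case
    proof (intro allI impI)
      fix i j assume h: "i + j = n" "1 \<le> i" "i \<le> na" "1 \<le> j" "j \<le> nb"
      have P: "d i (j-1) = d (i-1) (j-1) + \<alpha> i (j-1) \<or>
          (d i (j-1) = d i (j-1-1) - \<beta> i (j-1) \<and> \<bar>d i (j-1)\<bar> \<le> \<bar>d (i-1) (j-1) + \<alpha> i (j-1)\<bar>
           \<and> \<not> (d i (j-1-1) > M \<and> d (i-1) (j-1) < -M))"
      proof (cases "j = 1")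
        case True then show ?thesis using bx[of i] h by simp
      next
        case False
        then have j2: "2 \<le> j" using h by simp
        have ih: "\<not> (d i (j-1-1) > M \<and> d (i-1) (j-1) < -M)"
          using less.IH[of "i + (j-1)", rule_format, of i "j-1"] h j2 by simp
        have "d i (j-1) = d (i-1) (j-1) + \<alpha> i (j-1) \<or> d i (j-1) = d i (j-1-1) - \<beta> i (j-1)"
          "\<bar>d i (j-1)\<bar> \<le> \<bar>d (i-1) (j-1) + \<alpha> i (j-1)\<bar>"
          using int[of i "j-1"] h j2 by simp_all
        then show ?thesis using ih by blast
      qed
      have Q: "d (i-1) j = d (i-1) (j-1) - \<beta> (i-1) j \<or>
          (d (i-1) j = d (i-1-1) j + \<alpha> (i-1) j \<and> \<bar>d (i-1) j\<bar> \<le> \<bar>d (i-1) (j-1) - \<beta> (i-1) j\<bar>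
           \<and> \<not> (d (i-1) (j-1) > M \<and> d (i-1-1) j < -M))"
      proof (cases "i = 1")
        case True then show ?thesis using bY[of j] h by simp
      next
        case False
        then have i2: "2 \<le> i" using h by simp
        have ih: "\<not> (d (i-1) (j-1) > M \<and> d (i-1-1) j < -M)"
          using less.IH[of "(i-1) + j", rule_format, of "i-1" j] h i2 by simp
        have "d (i-1) j = d (i-1-1) j + \<alpha> (i-1) j \<or> d (i-1) j = d (i-1) (j-1) - \<beta> (i-1) j"
          "\<bar>d (i-1) j\<bar> \<le> \<bar>d (i-1) (j-1) - \<beta> (i-1) j\<bar>"
          using int[of "i-1" j] h i2 by simp_all
        then show ?thesis using ih by blast
      qed
      show "\<not> (d i (j-1) > M \<and> d (i-1) j < -M)"
        by (rule K_arith[OF al(1) al(2) be(1) be(2) al(1) al(2) be(1) be(2) P Q])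
    qed
  qed
  have Kij: "\<not> (d i (j-1) > M \<and> d (i-1) j < -M)" if "1 \<le> i" "i \<le> na" "1 \<le> j" "j \<le> nb" for i j
    using K[of "i+j"] that by blast
  have lastcol: "d i nb \<le> M" if "i \<le> na" for i
    using that
  proof (induction i)
    case 0 then show ?case using row0[of nb] M0 by simp
  next
    case (Suc i)
    have I: "(d (Suc i) nb = d i nb \<or> d (Suc i) nb = d (Suc i) (nb-1) - \<beta> (Suc i) nb)
      \<and> \<bar>d (Suc i) nb\<bar> \<le> \<bar>d i nb\<bar> \<and> \<bar>d (Suc i) nb\<bar> \<le> \<bar>d (Suc i) (nb-1) - \<beta> (Suc i) nb\<bar>"
      using int[of "Suc i" nb] Suc.prems nb1 alz by simp
    have k: "\<not> (d (Suc i) (nb-1) > M \<and> d i nb < -M)" using Kij[of "Suc i" nb] Suc.prems nb1 by simp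
    have ih: "d i nb \<le> M" using Suc by simp
    show ?case using I k ih be(1)[of "Suc i" nb] by (smt (verit))
  qed
  have lastrow: "d na j \<ge> -M" if "j \<le> nb" for j
    using that
  proof (induction j)
    case 0 then show ?case using col0[of na] M0 by simp
  next
    case (Suc j)
    have I: "(d na (Suc j) = d (na-1) (Suc j) + \<alpha> na (Suc j) \<or> d na (Suc j) = d na j)
      \<and> \<bar>d na (Suc j)\<bar> \<le> \<bar>d (na-1) (Suc j) + \<alpha> na (Suc j)\<bar> \<and> \<bar>d na (Suc j)\<bar> \<le> \<bar>d na j\<bar>"
      using int[of na "Suc j"] Suc.prems na1 bez by simp
    have k: "\<not> (d na j > M \<and> d (na-1) (Suc j) < -M)" using Kij[of na "Suc j"] Suc.prems na1 by simp
    have ih: "d na j \<ge> -M" using Suc by simp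
    show ?case using I k ih al(1)[of na "Suc j"] by (smt (verit))
  qed
  have I: "\<bar>d na nb\<bar> \<le> \<bar>d (na-1) nb\<bar> \<and> \<bar>d na nb\<bar> \<le> \<bar>d na (nb-1)\<bar>"
    using int[of na nb] na1 nb1 alz bez by simp
  have k: "\<not> (d na (nb-1) > M \<and> d (na-1) nb < -M)" using Kij[of na nb] na1 nb1 by simp
  have c: "d (na-1) nb \<le> M" using lastcol[of "na-1"] by simp
  have r: "d na (nb-1) \<ge> -M" using lastrow[of "nb-1"] by simp
  show ?thesis using I k c r by (smt (verit))
qed

lemma gap:
  fixes fX fY N :: real and zX zY :: int
  assumes "N > 0" "N*fX = of_int zX" "N*fY = of_int zY" "\<bar>fX\<bar> > \<bar>fY\<bar>"
  shows "N * \<bar>fX\<bar> \<ge> N * \<bar>fY\<bar> + 1"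
proof -
  have "N * \<bar>fX\<bar> = \<bar>of_int zX\<bar>" "N * \<bar>fY\<bar> = \<bar>of_int zY\<bar>"
  proof -
    have "N * \<bar>fX\<bar> = \<bar>N * fX\<bar>" "N * \<bar>fY\<bar> = \<bar>N * fY\<bar>" using assms(1) by (simp_all add: abs_mult)
    then show "N * \<bar>fX\<bar> = \<bar>of_int zX\<bar>" "N * \<bar>fY\<bar> = \<bar>of_int zY\<bar>" using assms(2,3) by simp_all
  qed
  moreover have "\<bar>zX\<bar> > \<bar>zY\<bar>"
  proof -
    have "N * \<bar>fX\<bar> > N * \<bar>fY\<bar>" using assms by simp
    then have "\<bar>real_of_int zX\<bar> > \<bar>real_of_int zY\<bar>" using calculation by simp
    then show ?thesis by linarith
  qed
  then have "\<bar>zX\<bar> \<ge> \<bar>zY\<bar> + 1" by simp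
  then have "\<bar>real_of_int zX\<bar> \<ge> \<bar>real_of_int zY\<bar> + 1" by linarith
  ultimately show ?thesis by simp
qed

lemma choose_gen:
  fixes cX cY fX fY lam N :: real and zX zY :: int
  assumes "0\<le>cX" "cX\<le>1" "0\<le>cY" "cY\<le>1" "N>0" "lam > N"
    "N*fX = of_int zX" "N*fY = of_int zY"
  shows "cX - lam*\<bar>fX\<bar> > cY - lam*\<bar>fY\<bar> \<Longrightarrow> \<bar>fX\<bar> \<le> \<bar>fY\<bar>"
    and "\<not> (cX - lam*\<bar>fX\<bar> > cY - lam*\<bar>fY\<bar>) \<Longrightarrow> \<bar>fY\<bar> \<le> \<bar>fX\<bar>"
proof -
  have lp: "lam > 0" using assms by linarith
  have key: "lam * \<bar>f1\<bar> > lam * \<bar>f2\<bar> + 1"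
    if "N*f1 = of_int z1" "N*f2 = of_int z2" "\<bar>f1\<bar> > \<bar>f2\<bar>" for f1 f2 z1 z2
  proof -
    have g: "N * \<bar>f1\<bar> \<ge> N * \<bar>f2\<bar> + 1" by (rule gap[OF assms(5) that])
    have "N * (\<bar>f1\<bar> - \<bar>f2\<bar>) \<ge> 1" using g by (simp add: algebra_simps)
    moreover have "\<bar>f1\<bar> - \<bar>f2\<bar> > 0" using that by simp
    ultimately have "lam * (\<bar>f1\<bar> - \<bar>f2\<bar>) > 1"
      using assms(6) by (smt (verit) mult_strict_right_mono)
    then show ?thesis by (simp add: algebra_simps)
  qed
  show "cX - lam*\<bar>fX\<bar> > cY - lam*\<bar>fY\<bar> \<Longrightarrow> \<bar>fX\<bar> \<le> \<bar>fY\<bar>"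
    using key[OF assms(7,8)] assms(1-4) by force
  show "\<not> (cX - lam*\<bar>fX\<bar> > cY - lam*\<bar>fY\<bar>) \<Longrightarrow> \<bar>fY\<bar> \<le> \<bar>fX\<bar>"
    using key[OF assms(8,7)] assms(1-4) by force
qed

lemma xO_i0: "xO la lb lam i 0 = map Inl [0..<i]" by (cases i) auto
lemma xO_0j: "xO la lb lam 0 j = map Inr [0..<j]" by simp

lemma G_hat_split:
  assumes "npos la \<ge> 1" "nneg lb \<ge> 1" "npos lb \<ge> 1" "nneg la \<ge> 1"
    "cnt_a q \<le> length la" "cnt_b q \<le> length lb"
  shows "\<exists>c. 0 \<le> c \<and> c \<le> 1 \<and> G_hat la lb lam q = c - lam * \<bar>A_part la lb q - B_part la lb q\<bar>"
proof -
  define a1 a0 b1 b0 where "a1 = real (npos la)" "a0 = real (nneg la)" "b1 = real (npos lb)" "b0 = real (nneg lb)"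
  define k where "k = (a1 + b1) * (a0 + b0)"
  have pos: "a1 \<ge> 1" "a0 \<ge> 1" "b1 \<ge> 1" "b0 \<ge> 1" using assms unfolding a1_a0_b1_b0_def by simp_all
  have kp: "k > 0" unfolding k_def using pos by simp
  have kge: "a1 * b0 + a0 * b1 \<le> k" unfolding k_def using pos by (simp add: algebra_simps)
  have A: "0 \<le> A_part la lb q" "A_part la lb q \<le> 1" using A_range[of q la lb] assms by auto
  have B: "0 \<le> B_part la lb q" "B_part la lb q \<le> 1" using B_range[of q lb la] assms by auto
  define c where "c = (a1 * b0) / k * A_part la lb q + (a0 * b1) / k * B_part la lb q"
  have c0: "0 \<le> c" unfolding c_def using A B pos kp by simp
  have "c \<le> (a1 * b0) / k * 1 + (a0 * b1) / k * 1" unfolding c_def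
    using A B pos kp by (intro add_mono mult_left_mono) auto
  also have "\<dots> = (a1 * b0 + a0 * b1) / k" by (simp add: add_divide_distrib)
  also have "\<dots> \<le> 1" using kge kp by simp
  finally have c1: "c \<le> 1" .
  have "G_hat la lb lam q = c - lam * \<bar>A_part la lb q - B_part la lb q\<bar>"
    unfolding G_hat_def c_def k_def a1_a0_b1_b0_def Let_def by simp
  then show ?thesis using c0 c1 by blast
qed

lemma xAUC_full:
  "cnt_a q = length la \<Longrightarrow> cnt_b q = length lb \<Longrightarrow>
   delta_xAUC la lb q = \<bar>A_part la lb q - B_part la lb q\<bar>"
  by (simp add: delta_xAUC_def xAUC_ab_def xAUC_ba_def A_part_def B_part_def ext_a_def ext_b_def)

theorem theorem1:
  fixes la lb :: "bool list"
  assumes "npos la \<ge> 1" and "nneg la \<ge> 1" and "npos lb \<ge> 1" and "nneg lb \<ge> 1"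
  shows "\<exists>lam0 :: real. lam0 \<ge> 0 \<and> (\<forall>lam \<ge> lam0.
           delta_xAUC la lb (xOrder la lb lam)
             \<le> max (1 / real (npos la)) (1 / real (npos lb)))"
proof (intro exI conjI allI impI)
  define N where "N = real (npos la * nneg lb * npos lb * nneg la)"
  have Np: "N > 0" unfolding N_def using assms by simp
  show "N + 1 \<ge> 0" using Np by simp
  fix lam :: real assume lam: "lam \<ge> N + 1"
  define M where "M = max (1 / real (npos la)) (1 / real (npos lb))"
  define na nb where "na = length la" "nb = length lb"
  define Ord where "Ord = xO la lb lam"
  define f where "f q = A_part la lb q - B_part la lb q" for q
  define d where "d i j = f (Ord i j)" for i j
  define \<alpha> where "\<alpha> i j = A_part la lb (Ord (i-1) j @ [Inl (i-1)]) - A_part la lb (Ord (i-1) j)" for i j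
  define \<beta> where "\<beta> i j = B_part la lb (Ord i (j-1) @ [Inr (j-1)]) - B_part la lb (Ord i (j-1))" for i j
  have Oc: "cnt_a (Ord i j) = i" "cnt_b (Ord i j) = j" "validq (Ord i j)" for i j
    using xO_props[of la lb lam i j] unfolding Ord_def by auto
  have na1: "1 \<le> na" using assms(1) unfolding na_nb_def npos_def
    by (cases la) auto
  have nb1: "1 \<le> nb" using assms(3) unfolding na_nb_def npos_def
    by (cases lb) auto
  have al: "0 \<le> \<alpha> i j" "\<alpha> i j \<le> M" for i j
  proof -
    have e: "Inl (i-1) = Inl (cnt_a (Ord (i-1) j))" using Oc by simp
    show "0 \<le> \<alpha> i j" unfolding \<alpha>_def e by (rule A_Inl(1)[OF Oc(3) assms(1,4)])
    have "\<alpha> i j \<le> 1 / real (npos la)" unfolding \<alpha>_def e by (rule A_Inl(2)[OF Oc(3) assms(1,4)])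
    then show "\<alpha> i j \<le> M" unfolding M_def by linarith
  qed
  have be: "0 \<le> \<beta> i j" "\<beta> i j \<le> M" for i j
  proof -
    have e: "Inr (j-1) = Inr (cnt_b (Ord i (j-1)))" using Oc by simp
    show "0 \<le> \<beta> i j" unfolding \<beta>_def e by (rule B_Inr(1)[OF Oc(3) assms(3,2)])
    have "\<beta> i j \<le> 1 / real (npos lb)" unfolding \<beta>_def e by (rule B_Inr(2)[OF Oc(3) assms(3,2)])
    then show "\<beta> i j \<le> M" unfolding M_def by linarith
  qed
  have alz: "\<alpha> i nb = 0" for i
  proof -
    have e: "Inl (i-1) = Inl (cnt_a (Ord (i-1) nb))" using Oc by simp
    show ?thesis unfolding \<alpha>_def e using A_Inl0[OF Oc(3)] Oc(2) na_nb_def by simp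
  qed
  have bez: "\<beta> na j = 0" for j
  proof -
    have e: "Inr (j-1) = Inr (cnt_b (Ord na (j-1)))" using Oc by simp
    show ?thesis unfolding \<beta>_def e using B_Inr0[OF Oc(3)] Oc(1) na_nb_def by simp
  qed
  have d00: "d 0 0 = 0" unfolding d_def f_def using A0[of "Ord 0 0"] B0[of "Ord 0 0"] Oc by simp
  have fX: "f (Ord (i-1) j @ [Inl (i-1)]) = d (i-1) j + \<alpha> i j" if "1 \<le> i" "i \<le> na" for i j
  proof -
    have e: "Inl (i-1) = Inl (cnt_a (Ord (i-1) j))" using Oc by simp
    have "B_part la lb (Ord (i-1) j @ [Inl (i-1)]) = B_part la lb (Ord (i-1) j)"
      unfolding e by (rule B_Inl) (use Oc that na_nb_def in simp)
    then show ?thesis unfolding f_def d_def \<alpha>_def by simp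
  qed
  have fY: "f (Ord i (j-1) @ [Inr (j-1)]) = d i (j-1) - \<beta> i j" if "1 \<le> j" "j \<le> nb" for i j
  proof -
    have e: "Inr (j-1) = Inr (cnt_b (Ord i (j-1)))" using Oc by simp
    have "A_part la lb (Ord i (j-1) @ [Inr (j-1)]) = A_part la lb (Ord i (j-1))"
      unfolding e by (rule A_Inr) (use Oc that na_nb_def in simp)
    then show ?thesis unfolding f_def d_def \<beta>_def by simp
  qed
  have bx: "d i 0 = d (i-1) 0 + \<alpha> i 0" if "1 \<le> i" "i \<le> na" for i
  proof -
    have "Ord i 0 = Ord (i-1) 0 @ [Inl (i-1)]" unfolding Ord_def xO_i0 using that
      by (cases i) auto
    then show ?thesis using fX[OF that, of 0] unfolding d_def by simp
  qed
  have bY: "d 0 j = d 0 (j-1) - \<beta> 0 j" if "1 \<le> j" "j \<le> nb" for j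
  proof -
    have "Ord 0 j = Ord 0 (j-1) @ [Inr (j-1)]" unfolding Ord_def xO_0j using that
      by (cases j) auto
    then show ?thesis using fY[OF that, of 0] unfolding d_def by simp
  qed
  have ints: "\<exists>z::int. N * f q = of_int z" for q
    unfolding N_def f_def using AB_int[OF assms(1,4,3,2)] by simp
  have rng: "\<exists>c. 0 \<le> c \<and> c \<le> 1 \<and> G_hat la lb lam q = c - lam * \<bar>f q\<bar>"
    if "cnt_a q \<le> length la" "cnt_b q \<le> length lb" for q
    unfolding f_def by (rule G_hat_split[OF assms(1,4,3,2) that])
  have int: "(d i j = d (i-1) j + \<alpha> i j \<or> d i j = d i (j-1) - \<beta> i j)
      \<and> \<bar>d i j\<bar> \<le> \<bar>d (i-1) j + \<alpha> i j\<bar> \<and> \<bar>d i j\<bar> \<le> \<bar>d i (j-1) - \<beta> i j\<bar>"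
    if h: "1 \<le> i" "i \<le> na" "1 \<le> j" "j \<le> nb" for i j
  proof -
    define X where "X = Ord (i-1) j @ [Inl (i-1)]"
    define Y where "Y = Ord i (j-1) @ [Inr (j-1)]"
    have fx: "f X = d (i-1) j + \<alpha> i j" unfolding X_def using fX[OF h(1,2)] .
    have fy: "f Y = d i (j-1) - \<beta> i j" unfolding Y_def using fY[OF h(3,4)] .
    obtain i' j' where ij: "i = Suc i'" "j = Suc j'" using h by (cases i; cases j) auto
    have Oij: "Ord i j = (if G_hat la lb lam X > G_hat la lb lam Y then X else Y)"
      unfolding Ord_def X_def Y_def ij by simp
    obtain cX where cX: "0 \<le> cX" "cX \<le> 1" "G_hat la lb lam X = cX - lam * \<bar>f X\<bar>"
      using rng[of X] Oc h unfolding X_def na_nb_def by auto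
    obtain cY where cY: "0 \<le> cY" "cY \<le> 1" "G_hat la lb lam Y = cY - lam * \<bar>f Y\<bar>"
      using rng[of Y] Oc h unfolding Y_def na_nb_def by auto
    obtain zX where zX: "N * f X = of_int zX" using ints by blast
    obtain zY where zY: "N * f Y = of_int zY" using ints by blast
    have lamN: "lam > N" using lam by simp
    note ch = choose_gen[OF cX(1,2) cY(1,2) Np lamN zX zY]
    show ?thesis
    proof (cases "G_hat la lb lam X > G_hat la lb lam Y")
      case True
      then have "d i j = f X" unfolding d_def Oij by simp
      moreover have "\<bar>f X\<bar> \<le> \<bar>f Y\<bar>" using ch(1) True cX cY by simp
      ultimately show ?thesis using fx fy by simp
    next
      case False
      then have "d i j = f Y" unfolding d_def Oij by simp
      moreover have "\<bar>f Y\<bar> \<le> \<bar>f X\<bar>" using ch(2) False cX cY by simp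
      ultimately show ?thesis using fx fy by simp
    qed
  qed
  have "\<bar>d na nb\<bar> \<le> M"
    by (rule abstract_grid[of \<alpha> M \<beta> nb na d, OF al be alz bez d00 bx bY int na1 nb1])
  moreover have "delta_xAUC la lb (xOrder la lb lam) = \<bar>d na nb\<bar>"
    unfolding xOrder_def d_def f_def Ord_def na_nb_def
    by (rule xAUC_full) (use Oc[unfolded Ord_def] in simp_all)
  ultimately show "delta_xAUC la lb (xOrder la lb lam) \<le> max (1 / real (npos la)) (1 / real (npos lb))"
    unfolding M_def by simp
qed

end
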